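(* In the protocol IT-HS described in the context, with $f<\frac{n}{3}$ Byzantine parties, if some nonfaulty party sets $key3=v$ and $key3\_val=val$ in view $v$, then there exist $f+1$ nonfaulty parties whose $suggest$ messages in every view $v'>v$ support the pair $(v,val)$.
   Context: Model. $n$ parties with inputs $x_i$; up to $f$ Byzantine (arbitrary behaviour), the rest nonfaulty; authenticated point-to-point channels; partial synchrony: after an unknown time GST every message arrives within known $\Delta$ time and clocks are synchronized, before GST delays are arbitrary but finite. A party does something "in view $v$" if its variable $view$ equals $v$ at that time. Support: a $suggest$ message whose $key2$, $key2\_val$, $prev\_key2$ fields are $(k2,v2,pk2)$ supports a pair $(K,V)$ if $K\le pk2$, or $K\le k2$ and $V=v2$. Protocol IT-HS (party $i$). Variables: $lock\gets 0$, $lock\_val\gets x_i$; $key3\gets 0$, $key3\_val\gets x_i$; $key2\gets 0$, $key2\_val\gets x_i$, $prev\_key2\gets -1$; $key1\gets 0$, $key1\_val\gets x_i$, $prev\_key1\gets -1$; $view\gets 0$; $highest\_request[j]\gets 0$, $highest\_abort[j]\gets 0$ for $j\in[n]$. "Send-upon-join $m$": for each $j$, send $m$ to $j$ as soon as $highest\_request[j]$ equals the current view. Background: (B1) on $\langle request,v\rangle$ from $j$, $highest\_request[j]\gets\max(highest\_request[j],v)$. (B2) on $\langle done,val\rangle$ from $f+1$ parties with the same $val$: if no $done$ sent yet, send $\langle done,val\rangle$ to all. (B3) on $\langle done,val\rangle$ from $n-f$ parties with the same $val$: decide $val$, terminate. (B4) on $\langle abort,v\rangle$ from $j$ with $highest\_abort[j]<v$: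 $highest\_abort[j]\gets v$; $u\gets$ the $(f+1)$-th largest entry of $highest\_abort$; if $u>highest\_abort[i]$ send $\langle abort,u\rangle$ to all and set $highest\_abort[i]\gets u$; $w\gets$ the $(n-f)$-th largest entry; if $w\ge view$ set $view\gets w+1$. Views: for each value $v$ of $view$, while $view=v$: fresh per-view state; after $11\Delta$ local time send $\langle abort,v\rangle$ to all; ignore other views' messages except $abort$, $done$, $request$; primary $p=(v\bmod n)+1$. View change: send $\langle request,v\rangle$ to all; when $highest\_request[p]=v$ send $\langle suggest,key3,key3\_val,key2,key2\_val,prev\_key2,v\rangle$ to $p$; send-upon-join $\langle proof,key1,key1\_val,prev\_key1,v\rangle$. If $i=p$: upon first $\langle suggest,k3,v3,k2,v2,pk2,v\rangle$ from a party, if $pk2<k2<v$ add $(k2,v2,pk2)$ to $key2\_proofs$; if $k3=0$ add $(k3,v3)$ to $suggestions$; else if $k3<v$ add $(k3,v3)$ as soon as at least $f+1$ triples $(k,w,pk)\in key2\_proofs$ satisfy $k3\le pk$ or ($k3\le k$ and $w=v3$); once $|suggestions|\ge n-f$, send-upon-join $\langle propose,k,w,v\rangle$ for $(k,w)\in suggestions$ with maximal $k$. Message processing: upon first $\langle proof,k1,v1,pk1,v\rangle$ from a party, if $v>k1>pk1$ add $(k1,v1,pk1)$ to $proofs$. Upon first $\langle propose,key,val,v\rangle$ from $p$: if $lock=0$ or $val=lock\_val$, send-upon-join $\langle echo,val,v\rangle$; else if $v>key\ge lock$, then once at least $f+1$ triples $(k,w,pk)\in proofs$ satisfy $lock\le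 pk$ or ($lock\le k$ and $w\ne lock\_val$), send-upon-join $\langle echo,val,v\rangle$. Upon $\langle echo,val,v\rangle$ from $n-f$ parties with the same $val$: send-upon-join $\langle key1,val,v\rangle$; if $key1\_val\ne val$ then $prev\_key1\gets key1$, $key1\_val\gets val$; $key1\gets v$. Upon $\langle key1,val,v\rangle$ from $n-f$ parties (same $val$): send-upon-join $\langle key2,val,v\rangle$; if $key2\_val\ne val$ then $prev\_key2\gets key2$, $key2\_val\gets val$; $key2\gets v$. Upon $\langle key2,val,v\rangle$ from $n-f$ (same $val$): send-upon-join $\langle key3,val,v\rangle$; $key3\gets v$, $key3\_val\gets val$. Upon $\langle key3,val,v\rangle$ from $n-f$ (same $val$): send-upon-join $\langle lock,val,v\rangle$; $lock\gets v$, $lock\_val\gets val$. Upon $\langle lock,val,v\rangle$ from $n-f$ (same $val$): if no $done$ sent yet, send $\langle done,val\rangle$ to all. *)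

theory Defs
  imports Main
begin

text \<open>Parties are 1..n. Views are naturals; key fields
  (key1, key2, key3, lock and their prev_ variants) are integers (prev starts at -1).
  Timing is abstracted away: every step is a nondeterministic interleaving of
  message deliveries, local protocol actions, and Byzantine sends.\<close>

datatype 'v msg =
    MRequest nat | MAbort nat | MDone 'v
  | MSuggest int 'v int 'v int nat   \<comment> \<open>key3, key3_val, key2, key2_val, prev_key2, view\<close>
  | MProof int 'v int nat            \<comment> \<open>key1, key1_val, prev_key1, view\<close>
  | MPropose int 'v nat              \<comment> \<open>key, val, view\<close>
  | MEcho 'v nat | MKey1 'v nat | MKey2 'v nat | MKey3 'v nat | MLock 'v nat

fun msg_view :: "'v msg \<Rightarrow> nat option" where
  "msg_view (MSuggest _ _ _ _ _ w) = Some w"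
| "msg_view (MProof _ _ _ w) = Some w"
| "msg_view (MPropose _ _ w) = Some w"
| "msg_view (MEcho _ w) = Some w"
| "msg_view (MKey1 _ w) = Some w"
| "msg_view (MKey2 _ w) = Some w"
| "msg_view (MKey3 _ w) = Some w"
| "msg_view (MLock _ w) = Some w"
| "msg_view _ = None"

fun is_suggest :: "'v msg \<Rightarrow> bool" where
  "is_suggest (MSuggest _ _ _ _ _ _) = True" | "is_suggest _ = False"
fun is_proof :: "'v msg \<Rightarrow> bool" where
  "is_proof (MProof _ _ _ _) = True" | "is_proof _ = False"
fun is_propose :: "'v msg \<Rightarrow> bool" where
  "is_propose (MPropose _ _ _) = True" | "is_propose _ = False"

definition supports :: "int \<times> 'v \<times> int \<Rightarrow> int \<times> 'v \<Rightarrow> bool" where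
  "supports t P \<longleftrightarrow> (case t of (k2, v2, pk2) \<Rightarrow> case P of (K, V) \<Rightarrow>
      K \<le> pk2 \<or> (K \<le> k2 \<and> V = v2))"

text \<open>Local state of a party. Fields from rcv on are per-view state.\<close>
record 'v lst =
  lock :: int
  lock_val :: 'v
  key3 :: int
  key3_val :: 'v
  key2 :: int
  key2_val :: 'v
  prev_key2 :: int
  key1 :: int
  key1_val :: 'v
  prev_key1 :: int
  view :: nat
  hreq :: "nat \<Rightarrow> nat"
  habort :: "nat \<Rightarrow> nat"
  done_sent :: bool
  decided :: "'v option"
  done_rcv :: "(nat \<times> 'v) set"
  rcv :: "(nat \<times> 'v msg) list"     \<comment> \<open>messages of the current view, in order of receipt (sender, msg)\<close>
  pend :: "'v msg set"               \<comment> \<open>messages registered for send-upon-join\<close>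
  sentp :: "(nat \<times> 'v msg) set"     \<comment> \<open>(destination, msg) already sent from pend\<close>
  sugg_sent :: bool
  abort_sent :: bool
  prop_sent :: bool
  echo_done :: bool
  k1f :: "'v set"
  k2f :: "'v set"
  k3f :: "'v set"
  lkf :: "'v set"

definition primary :: "nat \<Rightarrow> nat \<Rightarrow> nat" where
  "primary n v = (v mod n) + 1"

definition to_all :: "nat \<Rightarrow> 'v msg \<Rightarrow> (nat \<times> 'v msg) set" where
  "to_all n m = (\<lambda>j. (j, m)) ` {1..n}"

text \<open>k-th largest entry (k \<ge> 1) of h over the parties 1..n.\<close>
definition kth_largest :: "nat \<Rightarrow> (nat \<Rightarrow> nat) \<Rightarrow> nat \<Rightarrow> nat" where
  "kth_largest n h k = rev (sort (map h [1..<Suc n])) ! (k - 1)"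

definition init_lst :: "'v \<Rightarrow> 'v lst" where
  "init_lst xi = \<lparr> lock = 0, lock_val = xi, key3 = 0, key3_val = xi,
     key2 = 0, key2_val = xi, prev_key2 = -1, key1 = 0, key1_val = xi, prev_key1 = -1,
     view = 0, hreq = (\<lambda>_. 0), habort = (\<lambda>_. 0), done_sent = False, decided = None,
     done_rcv = {}, rcv = [], pend = {MProof 0 xi (-1) 0}, sentp = {},
     sugg_sent = False, abort_sent = False, prop_sent = False, echo_done = False,
     k1f = {}, k2f = {}, k3f = {}, lkf = {} \<rparr>"

text \<open>Entering view w: fresh per-view state; the proof message is registered for
  send-upon-join (the request message is sent by the caller).\<close>
definition enter_view :: "nat \<Rightarrow> 'v lst \<Rightarrow> 'v lst" where
  "enter_view w s = s\<lparr> view := w, rcv := [],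
     pend := {MProof (key1 s) (key1_val s) (prev_key1 s) w}, sentp := {},
     sugg_sent := False, abort_sent := False, prop_sent := False, echo_done := False,
     k1f := {}, k2f := {}, k3f := {}, lkf := {} \<rparr>"

text \<open>Receipt of message m from j by party i (background handlers B1-B4, and
  buffering of current-view messages; other views' messages are ignored).\<close>
fun on_recv :: "nat \<Rightarrow> nat \<Rightarrow> nat \<Rightarrow> nat \<Rightarrow> 'v msg \<Rightarrow> 'v lst \<Rightarrow> 'v lst \<times> (nat \<times> 'v msg) set" where
  "on_recv n f i j (MRequest w) s = (s\<lparr>hreq := (hreq s)(j := max (hreq s j) w)\<rparr>, {})"
| "on_recv n f i j (MDone val) s =
    (let s1 = s\<lparr>done_rcv := insert (j, val) (done_rcv s)\<rparr>;
         c = card {k. (k, val) \<in> done_rcv s1};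
         r = (if f + 1 \<le> c \<and> \<not> done_sent s1
              then (s1\<lparr>done_sent := True\<rparr>, to_all n (MDone val)) else (s1, {}));
         s3 = (if n - f \<le> c then (fst r)\<lparr>decided := Some val\<rparr> else fst r)
     in (s3, snd r))"
| "on_recv n f i j (MAbort w) s =
    (if habort s j < w then
       (let h1 = (habort s)(j := w);
            u = kth_largest n h1 (f + 1);
            h2 = (if h1 i < u then h1(i := u) else h1);
            out1 = (if h1 i < u then to_all n (MAbort u) else {});
            s1 = s\<lparr>habort := h2\<rparr>;
            w' = kth_largest n h2 (n - f)
        in if view s1 \<le> w'
           then (enter_view (w' + 1) s1, out1 \<union> to_all n (MRequest (w' + 1)))
           else (s1, out1))
     else (s, {}))"
| "on_recv n f i j m s =
    (if msg_view m = Some (view s) then (s\<lparr>rcv := rcv s @ [(j, m)]\<rparr>, {}) else (s, {}))"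

definition first_msg :: "(nat \<times> 'v msg) list \<Rightarrow> nat \<Rightarrow> ('v msg \<Rightarrow> bool) \<Rightarrow> 'v msg option" where
  "first_msg xs j P = (case filter (\<lambda>(k, m). k = j \<and> P m) xs of [] \<Rightarrow> None | (k, m) # _ \<Rightarrow> Some m)"

definition key2_proofs :: "'v lst \<Rightarrow> (nat \<times> (int \<times> 'v \<times> int)) set" where
  "key2_proofs s = {(j, (k2, v2, pk2)) | j k3 v3 k2 v2 pk2 w.
      first_msg (rcv s) j is_suggest = Some (MSuggest k3 v3 k2 v2 pk2 w)
      \<and> pk2 < k2 \<and> k2 < int (view s)}"

definition suggestions :: "nat \<Rightarrow> 'v lst \<Rightarrow> (nat \<times> int \<times> 'v) set" where
  "suggestions f s = {(j, k3, v3) | j k3 v3 k2 v2 pk2 w.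
      first_msg (rcv s) j is_suggest = Some (MSuggest k3 v3 k2 v2 pk2 w)
      \<and> (k3 = 0 \<or> (k3 < int (view s) \<and>
           f + 1 \<le> card {l. \<exists>t. (l, t) \<in> key2_proofs s \<and> supports t (k3, v3)}))}"

definition proofs :: "'v lst \<Rightarrow> (nat \<times> (int \<times> 'v \<times> int)) set" where
  "proofs s = {(j, (k1, v1, pk1)) | j k1 v1 pk1 w.
      first_msg (rcv s) j is_proof = Some (MProof k1 v1 pk1 w)
      \<and> k1 < int (view s) \<and> pk1 < k1}"

datatype 'v act = ATimer | ASuggest | ASend nat "'v msg" | APropose | AEcho
  | AKey1 'v | AKey2 'v | AKey3 'v | ALock 'v | ADone 'v

text \<open>Local protocol actions of party i in its current view: state s, action a,
  new state, set of (destination, message) sent.\<close>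
inductive lact :: "nat \<Rightarrow> nat \<Rightarrow> nat \<Rightarrow> 'v lst \<Rightarrow> 'v act \<Rightarrow> 'v lst \<Rightarrow> (nat \<times> 'v msg) set \<Rightarrow> bool"
  for n f i where
  timer: "\<not> abort_sent s \<Longrightarrow>
    lact n f i s ATimer (s\<lparr>abort_sent := True\<rparr>) (to_all n (MAbort (view s)))"
| suggest: "\<not> sugg_sent s \<Longrightarrow> hreq s (primary n (view s)) = view s \<Longrightarrow>
    lact n f i s ASuggest (s\<lparr>sugg_sent := True\<rparr>)
      {(primary n (view s), MSuggest (key3 s) (key3_val s) (key2 s) (key2_val s) (prev_key2 s) (view s))}"
| sendp: "m \<in> pend s \<Longrightarrow> j \<in> {1..n} \<Longrightarrow> hreq s j = view s \<Longrightarrow> (j, m) \<notin> sentp s \<Longrightarrow>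
    lact n f i s (ASend j m) (s\<lparr>sentp := insert (j, m) (sentp s)\<rparr>) {(j, m)}"
| propose: "i = primary n (view s) \<Longrightarrow> \<not> prop_sent s \<Longrightarrow>
    n - f \<le> card {j. \<exists>k w. (j, k, w) \<in> suggestions f s} \<Longrightarrow>
    (j, k, w) \<in> suggestions f s \<Longrightarrow>
    (\<forall>j' k' w'. (j', k', w') \<in> suggestions f s \<longrightarrow> k' \<le> k) \<Longrightarrow>
    lact n f i s APropose (s\<lparr>prop_sent := True, pend := insert (MPropose k w (view s)) (pend s)\<rparr>) {}"
| echo: "\<not> echo_done s \<Longrightarrow>
    first_msg (rcv s) (primary n (view s)) is_propose = Some (MPropose key val w) \<Longrightarrow>
    (lock s = 0 \<or> val = lock_val s \<or>
      (key < int (view s) \<and> lock s \<le> key \<and>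
       f + 1 \<le> card {j. \<exists>k w' pk. (j, (k, w', pk)) \<in> proofs s \<and>
                          (lock s \<le> pk \<or> (lock s \<le> k \<and> w' \<noteq> lock_val s))})) \<Longrightarrow>
    lact n f i s AEcho (s\<lparr>echo_done := True, pend := insert (MEcho val (view s)) (pend s)\<rparr>) {}"
| key1: "val \<notin> k1f s \<Longrightarrow> n - f \<le> card {j. (j, MEcho val (view s)) \<in> set (rcv s)} \<Longrightarrow>
    lact n f i s (AKey1 val) (s\<lparr>k1f := insert val (k1f s), pend := insert (MKey1 val (view s)) (pend s),
       prev_key1 := (if key1_val s \<noteq> val then key1 s else prev_key1 s),
       key1_val := val, key1 := int (view s)\<rparr>) {}"
| key2: "val \<notin> k2f s \<Longrightarrow> n - f \<le> card {j. (j, MKey1 val (view s)) \<in> set (rcv s)} \<Longrightarrow>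
    lact n f i s (AKey2 val) (s\<lparr>k2f := insert val (k2f s), pend := insert (MKey2 val (view s)) (pend s),
       prev_key2 := (if key2_val s \<noteq> val then key2 s else prev_key2 s),
       key2_val := val, key2 := int (view s)\<rparr>) {}"
| key3: "val \<notin> k3f s \<Longrightarrow> n - f \<le> card {j. (j, MKey2 val (view s)) \<in> set (rcv s)} \<Longrightarrow>
    lact n f i s (AKey3 val) (s\<lparr>k3f := insert val (k3f s), pend := insert (MKey3 val (view s)) (pend s),
       key3 := int (view s), key3_val := val\<rparr>) {}"
| lock: "val \<notin> lkf s \<Longrightarrow> n - f \<le> card {j. (j, MKey3 val (view s)) \<in> set (rcv s)} \<Longrightarrow>
    lact n f i s (ALock val) (s\<lparr>lkf := insert val (lkf s), pend := insert (MLock val (view s)) (pend s),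
       lock := int (view s), lock_val := val\<rparr>) {}"
| donel: "\<not> done_sent s \<Longrightarrow> n - f \<le> card {j. (j, MLock val (view s)) \<in> set (rcv s)} \<Longrightarrow>
    lact n f i s (ADone val) (s\<lparr>done_sent := True\<rparr>) (to_all n (MDone val))"

text \<open>Global state: local states and the set of all messages ever sent
  as (sender, destination, message).\<close>
record 'v gst =
  ls :: "nat \<Rightarrow> 'v lst"
  net :: "(nat \<times> nat \<times> 'v msg) set"

datatype 'v label = LRecv nat nat "'v msg" | LAct nat "'v act" | LByz nat nat "'v msg" | LIdle

definition add_sends :: "nat \<Rightarrow> (nat \<times> 'v msg) set \<Rightarrow> (nat \<times> nat \<times> 'v msg) set" where
  "add_sends i out = {(i, d, m) | d m. (d, m) \<in> out}"

text \<open>F is the set of Byzantine parties; nonfaulty parties that decided have terminated.\<close>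
inductive gstep :: "nat \<Rightarrow> nat \<Rightarrow> nat set \<Rightarrow> 'v gst \<Rightarrow> 'v label \<Rightarrow> 'v gst \<Rightarrow> bool"
  for n f F where
  deliver: "i \<in> {1..n} - F \<Longrightarrow> decided (ls g i) = None \<Longrightarrow> (j, i, m) \<in> net g \<Longrightarrow>
    on_recv n f i j m (ls g i) = (s', out) \<Longrightarrow>
    gstep n f F g (LRecv i j m) \<lparr>ls = (ls g)(i := s'), net = net g \<union> add_sends i out\<rparr>"
| local: "i \<in> {1..n} - F \<Longrightarrow> decided (ls g i) = None \<Longrightarrow> lact n f i (ls g i) a s' out \<Longrightarrow>
    gstep n f F g (LAct i a) \<lparr>ls = (ls g)(i := s'), net = net g \<union> add_sends i out\<rparr>"
| byz: "j \<in> F \<Longrightarrow> k \<in> {1..n} \<Longrightarrow>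
    gstep n f F g (LByz j k m) (g\<lparr>net := insert (j, k, m) (net g)\<rparr>)"
| idle: "gstep n f F g LIdle g"

definition init_gst :: "nat \<Rightarrow> nat set \<Rightarrow> (nat \<Rightarrow> 'v) \<Rightarrow> 'v gst" where
  "init_gst n F x = \<lparr>ls = (\<lambda>i. init_lst (x i)),
     net = {(i, j, MRequest 0) | i j. i \<in> {1..n} - F \<and> j \<in> {1..n}}\<rparr>"

definition is_exec :: "nat \<Rightarrow> nat \<Rightarrow> nat set \<Rightarrow> (nat \<Rightarrow> 'v) \<Rightarrow> (nat \<Rightarrow> 'v gst) \<Rightarrow> (nat \<Rightarrow> 'v label) \<Rightarrow> bool" where
  "is_exec n f F x E L \<longleftrightarrow> E 0 = init_gst n F x \<and> (\<forall>t. gstep n f F (E t) (L t) (E (Suc t)))"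

end

theory Submission
  imports Defs
begin

definition sup2 :: "'v lst \<Rightarrow> nat \<Rightarrow> 'v \<Rightarrow> bool" where
  "sup2 s w val = supports (key2 s, key2_val s, prev_key2 s) (int w, val)"

fun benign :: "'v msg \<Rightarrow> bool" where
  "benign (MRequest _) = True" | "benign (MAbort _) = True" | "benign (MDone _) = True"
| "benign _ = False"

definition inv_loc :: "'v gst \<Rightarrow> nat \<Rightarrow> bool" where
  "inv_loc g j \<longleftrightarrow> prev_key2 (ls g j) \<le> key2 (ls g j) \<and> key2 (ls g j) \<le> int (view (ls g j)) \<and>
    (\<forall>m\<in>pend (ls g j). \<not> is_suggest m \<and> (\<forall>val w. m = MKey2 val w \<longrightarrow> w = view (ls g j) \<and> sup2 (ls g j) w val)) \<and>
    (\<forall>d val w. (j,d,MKey2 val w) \<in> net g \<longrightarrow> w \<le> view (ls g j) \<and> sup2 (ls g j) w val) \<and>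
    (\<forall>d k3 v3 k2 v2 pk2 w. (j,d,MSuggest k3 v3 k2 v2 pk2 w) \<in> net g \<longrightarrow> w \<le> view (ls g j)) \<and>
    (\<forall>d d2 k3 v3 k2 v2 pk2 w' val w. (j,d,MSuggest k3 v3 k2 v2 pk2 w') \<in> net g \<longrightarrow>
        (j,d2,MKey2 val w) \<in> net g \<longrightarrow> w < w' \<longrightarrow> supports (k2,v2,pk2) (int w, val)) \<and>
    (\<forall>k m. (k,m) \<in> set (rcv (ls g j)) \<longrightarrow> (k,j,m) \<in> net g)"

definition Inv :: "nat \<Rightarrow> nat set \<Rightarrow> 'v gst \<Rightarrow> bool" where
  "Inv n F g \<longleftrightarrow> (\<forall>a b m. (a,b,m) \<in> net g \<longrightarrow> a \<in> {1..n}) \<and> (\<forall>j\<in>{1..n}-F. inv_loc g j)"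

lemma invD1: "inv_loc g j \<Longrightarrow> prev_key2 (ls g j) \<le> key2 (ls g j) \<and> key2 (ls g j) \<le> int (view (ls g j))"
  by (simp add: inv_loc_def)
lemma invD3: "inv_loc g j \<Longrightarrow> m \<in> pend (ls g j) \<Longrightarrow> \<not> is_suggest m"
  by (simp add: inv_loc_def)
lemma invD3b: "inv_loc g j \<Longrightarrow> MKey2 val w \<in> pend (ls g j) \<Longrightarrow> w = view (ls g j) \<and> sup2 (ls g j) w val"
  by (simp add: inv_loc_def)
lemma invD4: "inv_loc g j \<Longrightarrow> (j,d,MKey2 val w) \<in> net g \<Longrightarrow> w \<le> view (ls g j) \<and> sup2 (ls g j) w val"
  by (simp add: inv_loc_def)
lemma invD5: "inv_loc g j \<Longrightarrow> (j,d,MSuggest k3 v3 k2 v2 pk2 w) \<in> net g \<Longrightarrow> w \<le> view (ls g j)"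
  by (simp add: inv_loc_def)
lemma invD6: "inv_loc g j \<Longrightarrow> (j,d,MSuggest k3 v3 k2 v2 pk2 w') \<in> net g \<Longrightarrow>
        (j,d2,MKey2 val w) \<in> net g \<Longrightarrow> w < w' \<Longrightarrow> supports (k2,v2,pk2) (int w, val)"
  by (simp add: inv_loc_def)
lemma invD7: "inv_loc g j \<Longrightarrow> (k,m) \<in> set (rcv (ls g j)) \<Longrightarrow> (k,j,m) \<in> net g"
  by (simp add: inv_loc_def)

lemma recv_props:
  assumes "on_recv n f i j m s = (s', out)"
  shows "key2 s' = key2 s \<and> key2_val s' = key2_val s \<and> prev_key2 s' = prev_key2 s \<and>
    ((view s' = view s \<and> pend s' = pend s) \<or> (view s < view s' \<and> pend s' \<subseteq> {mm. is_proof mm})) \<and>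
    set (rcv s') \<subseteq> set (rcv s) \<union> {(j,m)} \<and> (\<forall>(d,mm)\<in>out. benign mm)"
  using assms
  by (cases m) (auto simp: Let_def enter_view_def to_all_def split: if_splits)

lemma proof_not: "is_proof m \<Longrightarrow> \<not> is_suggest m \<and> (\<forall>v w. m \<noteq> MKey2 v w)"
  by (cases m) auto

lemma sup_mono:
  assumes "prev_key2 s \<le> key2 s" "key2 s \<le> int (view s)" "sup2 s w val"
    "key2 s' = int (view s)" "key2_val s' = val'"
    "prev_key2 s' = (if key2_val s \<noteq> val' then key2 s else prev_key2 s)"
  shows "sup2 s' w val"
  using assms by (auto simp: sup2_def supports_def split: if_splits)

lemma inv_other:
  assumes "inv_loc g j" "ls g' j = ls g j" "net g \<subseteq> net g'"
    "\<And>a b m. (a,b,m) \<in> net g' \<Longrightarrow> (a,b,m) \<notin> net g \<Longrightarrow> a \<noteq> j"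
  shows "inv_loc g' j"
proof -
  have A: "\<And>b m. (j,b,m) \<in> net g' \<Longrightarrow> (j,b,m) \<in> net g" using assms(4) by blast
  show ?thesis unfolding inv_loc_def assms(2)
  proof (intro conjI ballI allI impI)
    show "prev_key2 (ls g j) \<le> key2 (ls g j)" "key2 (ls g j) \<le> int (view (ls g j))"
      using invD1[OF assms(1)] by auto
  next
    fix m assume "m \<in> pend (ls g j)" then show "\<not> is_suggest m" using invD3[OF assms(1)] by blast
  next
    fix m val w assume "m \<in> pend (ls g j)" "m = MKey2 val w"
    then show "w = view (ls g j)" "sup2 (ls g j) w val" using invD3b[OF assms(1)] by blast+
  next
    fix d val w assume "(j, d, MKey2 val w) \<in> net g'"
    then show "w \<le> view (ls g j)" "sup2 (ls g j) w val" using invD4[OF assms(1)] A by blast+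
  next
    fix d k3 v3 k2 v2 pk2 w assume "(j, d, MSuggest k3 v3 k2 v2 pk2 w) \<in> net g'"
    then show "w \<le> view (ls g j)" using invD5[OF assms(1)] A by blast
  next
    fix d d2 k3 v3 k2 v2 pk2 w' val w assume "(j, d, MSuggest k3 v3 k2 v2 pk2 w') \<in> net g'"
      "(j, d2, MKey2 val w) \<in> net g'" "w < w'"
    then show "supports (k2, v2, pk2) (int w, val)" using invD6[OF assms(1)] A by blast
  next
    fix k m assume "(k, m) \<in> set (rcv (ls g j))"
    then show "(k, j, m) \<in> net g'" using invD7[OF assms(1)] assms(3) by blast
  qed
qed

lemma inv_recv:
  assumes "inv_loc g i" "on_recv n f i j m (ls g i) = (s', out)" "(j,i,m) \<in> net g"
    "g' = \<lparr>ls = (ls g)(i := s'), net = net g \<union> add_sends i out\<rparr>"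
  shows "inv_loc g' i"
proof -
  note P = recv_props[OF assms(2)]
  have nk: "\<And>d val w. (i,d,MKey2 val w) \<in> net g' \<Longrightarrow> (i,d,MKey2 val w) \<in> net g"
    using P assms(4) by (auto simp: add_sends_def)
  have ns: "\<And>d k3 v3 k2 v2 pk2 w. (i,d,MSuggest k3 v3 k2 v2 pk2 w) \<in> net g' \<Longrightarrow> (i,d,MSuggest k3 v3 k2 v2 pk2 w) \<in> net g"
    using P assms(4) by (auto simp: add_sends_def)
  have sup: "\<And>w val. sup2 s' w val = sup2 (ls g i) w val" using P by (simp add: sup2_def)
  have ls': "ls g' i = s'" using assms(4) by simp
  have net': "net g \<subseteq> net g'" using assms(4) by auto
  show ?thesis unfolding inv_loc_def ls'
  proof (intro conjI)
    show "prev_key2 s' \<le> key2 s'" using assms(1) P by (simp add: inv_loc_def)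
    show "key2 s' \<le> int (view s')" using assms(1) P by (auto simp: inv_loc_def)
    show "\<forall>m\<in>pend s'. \<not> is_suggest m \<and> (\<forall>val w. m = MKey2 val w \<longrightarrow> w = view s' \<and> sup2 s' w val)"
    proof
      fix mm assume mm: "mm \<in> pend s'"
      show "\<not> is_suggest mm \<and> (\<forall>val w. mm = MKey2 val w \<longrightarrow> w = view s' \<and> sup2 s' w val)"
      proof (cases "view s' = view (ls g i) \<and> pend s' = pend (ls g i)")
        case True
        then show ?thesis using assms(1) mm unfolding sup inv_loc_def by auto
      next
        case False
        then have "is_proof mm" using P mm by auto
        then show ?thesis using proof_not by blast
      qed
    qed
    have vle: "view (ls g i) \<le> view s'" using P by auto
    show "\<forall>d val w. (i,d,MKey2 val w) \<in> net g' \<longrightarrow> w \<le> view s' \<and> sup2 s' w val"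
    proof (intro allI impI)
      fix d val w assume "(i,d,MKey2 val w) \<in> net g'"
      then have "(i,d,MKey2 val w) \<in> net g" by (rule nk)
      then have "w \<le> view (ls g i) \<and> sup2 (ls g i) w val" using invD4[OF assms(1)] by blast
      then show "w \<le> view s' \<and> sup2 s' w val" using vle sup by auto
    qed
    show "\<forall>d k3 v3 k2 v2 pk2 w. (i,d,MSuggest k3 v3 k2 v2 pk2 w) \<in> net g' \<longrightarrow> w \<le> view s'"
    proof (intro allI impI)
      fix d k3 v3 k2 v2 pk2 w assume "(i,d,MSuggest k3 v3 k2 v2 pk2 w) \<in> net g'"
      then have "(i,d,MSuggest k3 v3 k2 v2 pk2 w) \<in> net g" by (rule ns)
      then have "w \<le> view (ls g i)" using invD5[OF assms(1)] by blast
      then show "w \<le> view s'" using vle by auto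
    qed
    show "\<forall>d d2 k3 v3 k2 v2 pk2 w' val w. (i,d,MSuggest k3 v3 k2 v2 pk2 w') \<in> net g' \<longrightarrow>
        (i,d2,MKey2 val w) \<in> net g' \<longrightarrow> w < w' \<longrightarrow> supports (k2,v2,pk2) (int w, val)"
    proof (intro allI impI)
      fix d d2 k3 v3 k2 v2 pk2 w' val w
      assume "(i,d,MSuggest k3 v3 k2 v2 pk2 w') \<in> net g'" "(i,d2,MKey2 val w) \<in> net g'" "w < w'"
      then show "supports (k2,v2,pk2) (int w, val)" using nk ns invD6[OF assms(1)] by blast
    qed
    show "\<forall>k m. (k,m) \<in> set (rcv s') \<longrightarrow> (k,i,m) \<in> net g'"
    proof (intro allI impI)
      fix k mm assume "(k,mm) \<in> set (rcv s')"
      then have "(k,mm) \<in> set (rcv (ls g i)) \<or> (k,mm) = (j,m)" using P by auto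
      then show "(k,i,mm) \<in> net g'" using invD7[OF assms(1)] assms(3) net' by blast
    qed
  qed
qed

lemma inv_gen:
  assumes I: "inv_loc g i"
    and g': "g' = \<lparr>ls = (ls g)(i := s'), net = net g \<union> add_sends i out\<rparr>"
    and H1: "prev_key2 s' \<le> key2 s'" "key2 s' \<le> int (view s')"
    and H2: "\<And>m. m \<in> pend s' \<Longrightarrow> \<not> is_suggest m"
    and H2b: "\<And>val w. MKey2 val w \<in> pend s' \<Longrightarrow> w = view s' \<and> sup2 s' w val"
    and H3: "\<And>w val. sup2 (ls g i) w val \<Longrightarrow> sup2 s' w val"
    and H4: "view (ls g i) \<le> view s'"
    and H5: "\<And>k m. (k,m) \<in> set (rcv s') \<Longrightarrow> (k,m) \<in> set (rcv (ls g i)) \<or> (k,i,m) \<in> net g"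
    and H6: "\<And>d val w. (d, MKey2 val w) \<in> out \<Longrightarrow> w = view (ls g i) \<and> sup2 s' w val"
    and H7: "\<And>d k3 v3 k2 v2 pk2 w. (d, MSuggest k3 v3 k2 v2 pk2 w) \<in> out \<Longrightarrow>
        w = view (ls g i) \<and> k2 = key2 s' \<and> v2 = key2_val s' \<and> pk2 = prev_key2 s'"
  shows "inv_loc g' i"
proof -
  have ls': "ls g' i = s'" using g' by simp
  have net': "net g' = net g \<union> add_sends i out" using g' by simp
  have K: "\<And>d val w. (i,d,MKey2 val w) \<in> net g' \<Longrightarrow> (i,d,MKey2 val w) \<in> net g \<or> (d, MKey2 val w) \<in> out"
    using net' by (auto simp: add_sends_def)
  have S: "\<And>d k3 v3 k2 v2 pk2 w. (i,d,MSuggest k3 v3 k2 v2 pk2 w) \<in> net g' \<Longrightarrow>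
     (i,d,MSuggest k3 v3 k2 v2 pk2 w) \<in> net g \<or> (d, MSuggest k3 v3 k2 v2 pk2 w) \<in> out"
    using net' by (auto simp: add_sends_def)
  show ?thesis unfolding inv_loc_def ls'
  proof (intro conjI ballI allI impI)
    show "prev_key2 s' \<le> key2 s'" "key2 s' \<le> int (view s')" using H1 by auto
  next
    fix m assume "m \<in> pend s'" then show "\<not> is_suggest m" using H2 by blast
  next
    fix m val w assume "m \<in> pend s'" "m = MKey2 val w"
    then show "w = view s'" "sup2 s' w val" using H2b by blast+
  next
    fix d val w assume "(i, d, MKey2 val w) \<in> net g'"
    then have "(i,d,MKey2 val w) \<in> net g \<or> (d, MKey2 val w) \<in> out" by (rule K)
    then have "w \<le> view s' \<and> sup2 s' w val"
    proof
      assume "(i,d,MKey2 val w) \<in> net g"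
      then have "w \<le> view (ls g i) \<and> sup2 (ls g i) w val" by (rule invD4[OF I])
      then show ?thesis using H3 H4 by auto
    next
      assume "(d, MKey2 val w) \<in> out"
      then show ?thesis using H6 H4 by auto
    qed
    then show "w \<le> view s'" "sup2 s' w val" by auto
  next
    fix d k3 v3 k2 v2 pk2 w assume "(i, d, MSuggest k3 v3 k2 v2 pk2 w) \<in> net g'"
    then have "(i,d,MSuggest k3 v3 k2 v2 pk2 w) \<in> net g \<or> (d, MSuggest k3 v3 k2 v2 pk2 w) \<in> out" by (rule S)
    then show "w \<le> view s'"
    proof
      assume "(i,d,MSuggest k3 v3 k2 v2 pk2 w) \<in> net g"
      then have "w \<le> view (ls g i)" by (rule invD5[OF I])
      then show ?thesis using H4 by auto
    next
      assume "(d, MSuggest k3 v3 k2 v2 pk2 w) \<in> out"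
      then show ?thesis using H7 H4 by auto
    qed
  next
    fix d d2 k3 v3 k2 v2 pk2 w' val w assume a1: "(i, d, MSuggest k3 v3 k2 v2 pk2 w') \<in> net g'"
      and a2: "(i, d2, MKey2 val w) \<in> net g'" and lt: "w < w'"
    from S[OF a1] K[OF a2]
    show "supports (k2, v2, pk2) (int w, val)"
    proof (elim disjE)
      assume "(i,d,MSuggest k3 v3 k2 v2 pk2 w') \<in> net g" "(i,d2,MKey2 val w) \<in> net g"
      then show ?thesis using invD6[OF I] lt by blast
    next
      assume b1: "(i,d,MSuggest k3 v3 k2 v2 pk2 w') \<in> net g" and b2: "(d2, MKey2 val w) \<in> out"
      have "w' \<le> view (ls g i)" using invD5[OF I b1] .
      moreover have "w = view (ls g i)" using H6[OF b2] by blast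
      ultimately show ?thesis using lt by simp
    next
      assume b1: "(d, MSuggest k3 v3 k2 v2 pk2 w') \<in> out" and b2: "(i,d2,MKey2 val w) \<in> net g"
      have "sup2 (ls g i) w val" using invD4[OF I b2] by blast
      then have "sup2 s' w val" by (rule H3)
      then show ?thesis using H7[OF b1] by (simp add: sup2_def)
    next
      assume b1: "(d, MSuggest k3 v3 k2 v2 pk2 w') \<in> out" and b2: "(d2, MKey2 val w) \<in> out"
      then show ?thesis using H6 H7 lt by fastforce
    qed
  next
    fix k m assume "(k, m) \<in> set (rcv s')"
    then show "(k, i, m) \<in> net g'" using H5 invD7[OF I] net' by blast
  qed
qed

lemma inv_local:
  assumes I: "inv_loc g i" and L: "lact n f i (ls g i) a s' out"
    and g': "g' = \<lparr>ls = (ls g)(i := s'), net = net g \<union> add_sends i out\<rparr>"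
  shows "inv_loc g' i"
proof -
  note D = invD1[OF I] invD3[OF I] invD3b[OF I]
  from L show ?thesis
  proof cases
    case timer
    then show ?thesis by (intro inv_gen[OF I g']) (use D in \<open>auto simp: to_all_def sup2_def\<close>)
  next
    case suggest
    then show ?thesis by (intro inv_gen[OF I g']) (use D in \<open>auto simp: sup2_def\<close>)
  next
    case (sendp m j)
    have ns0: "\<not> is_suggest m" using D(2) sendp by blast
    have ns: "\<forall>k3 v3 k2 v2 pk2 w. m \<noteq> MSuggest k3 v3 k2 v2 pk2 w" using ns0 by (cases m) auto
    show ?thesis by (intro inv_gen[OF I g']) (use D ns sendp in \<open>auto simp: sup2_def\<close>)
  next
    case (propose j k w)
    then show ?thesis by (intro inv_gen[OF I g']) (use D in \<open>auto simp: sup2_def\<close>)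
  next
    case (echo key val w)
    then show ?thesis by (intro inv_gen[OF I g']) (use D in \<open>auto simp: sup2_def\<close>)
  next
    case (key1 val)
    then show ?thesis by (intro inv_gen[OF I g']) (use D in \<open>auto simp: sup2_def\<close>)
  next
    case (key2 val)
    have M: "\<And>w v. sup2 (ls g i) w v \<Longrightarrow> sup2 s' w v"
      by (rule sup_mono[OF conjunct1[OF D(1)] conjunct2[OF D(1)]]) (use key2 in auto)
    show ?thesis
    proof (rule inv_gen[OF I g'])
      fix v w assume "MKey2 v w \<in> pend s'"
      then have "(v = val \<and> w = view (ls g i)) \<or> MKey2 v w \<in> pend (ls g i)" using key2 by auto
      then show "w = view s' \<and> sup2 s' w v"
      proof
        assume "v = val \<and> w = view (ls g i)" then show ?thesis using key2 by (simp add: sup2_def supports_def)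
      next
        assume "MKey2 v w \<in> pend (ls g i)" then show ?thesis using D(3) M key2 by auto
      qed
    qed (use D M key2 in auto)
  next
    case (key3 val)
    then show ?thesis by (intro inv_gen[OF I g']) (use D in \<open>auto simp: sup2_def\<close>)
  next
    case (lock val)
    then show ?thesis by (intro inv_gen[OF I g']) (use D in \<open>auto simp: sup2_def\<close>)
  next
    case (donel val)
    then show ?thesis by (intro inv_gen[OF I g']) (use D in \<open>auto simp: to_all_def sup2_def\<close>)
  qed
qed

lemma add_sends_sender: "(a,b,m) \<in> add_sends i out \<Longrightarrow> a = i"
  by (auto simp: add_sends_def)

lemma Inv_step:
  assumes I: "Inv n F g" and FS: "F \<subseteq> {1..n}" and st: "gstep n f F g l g'"
  shows "Inv n F g'"
  using st
proof cases
  case (deliver i j m s' out)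
  have I1: "\<forall>a b m. (a,b,m) \<in> net g \<longrightarrow> a \<in> {1..n}" and I2: "\<forall>j\<in>{1..n}-F. inv_loc g j"
    using I by (auto simp: Inv_def)
  show ?thesis unfolding Inv_def
  proof (intro conjI allI impI ballI)
    fix a b mm assume "(a,b,mm) \<in> net g'"
    then show "a \<in> {1..n}" using I1 deliver add_sends_sender by fastforce
  next
    fix k assume k: "k \<in> {1..n} - F"
    show "inv_loc g' k"
    proof (cases "k = i")
      case True
      then show ?thesis using inv_recv[of g i n f j m s' out g'] I2 deliver by auto
    next
      case False
      show ?thesis
        by (rule inv_other[of g k]) (use I2 k deliver False in \<open>auto simp: add_sends_def\<close>)
    qed
  qed
next
  case (local i a s' out)
  have I1: "\<forall>a b m. (a,b,m) \<in> net g \<longrightarrow> a \<in> {1..n}" and I2: "\<forall>j\<in>{1..n}-F. inv_loc g j"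
    using I by (auto simp: Inv_def)
  show ?thesis unfolding Inv_def
  proof (intro conjI allI impI ballI)
    fix a b mm assume "(a,b,mm) \<in> net g'"
    then show "a \<in> {1..n}" using I1 local add_sends_sender by fastforce
  next
    fix k assume k: "k \<in> {1..n} - F"
    show "inv_loc g' k"
    proof (cases "k = i")
      case True
      then show ?thesis using inv_local[of g i n f a s' out g'] I2 local by auto
    next
      case False
      show ?thesis
        by (rule inv_other[of g k]) (use I2 k local False in \<open>auto simp: add_sends_def\<close>)
    qed
  qed
next
  case (byz j k m)
  have I1: "\<forall>a b m. (a,b,m) \<in> net g \<longrightarrow> a \<in> {1..n}" and I2: "\<forall>j\<in>{1..n}-F. inv_loc g j"
    using I by (auto simp: Inv_def)
  show ?thesis unfolding Inv_def
  proof (intro conjI allI impI ballI)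
    fix a b mm assume "(a,b,mm) \<in> net g'"
    then show "a \<in> {1..n}" using I1 byz FS by auto
  next
    fix kk assume k: "kk \<in> {1..n} - F"
    show "inv_loc g' kk"
      by (rule inv_other[of g kk]) (use I2 k byz in auto)
  qed
next
  case idle
  then show ?thesis using I by simp
qed

lemma Inv_init: "Inv n F (init_gst n F x)"
  by (auto simp: Inv_def inv_loc_def init_gst_def init_lst_def)

lemma net_mono_step: "gstep n f F g l g' \<Longrightarrow> net g \<subseteq> net g'"
  by (induct rule: gstep.induct) auto

lemma exec_Inv: "is_exec n f F x E L \<Longrightarrow> F \<subseteq> {1..n} \<Longrightarrow> Inv n F (E t)"
proof (induct t)
  case 0 then show ?case using Inv_init by (simp add: is_exec_def)
next
  case (Suc t) then show ?case using Inv_step[of n F "E t" f "L t" "E (Suc t)"] by (simp add: is_exec_def)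
qed

lemma exec_net_mono: assumes "is_exec n f F x E L" "t \<le> t'" shows "net (E t) \<subseteq> net (E t')"
  using assms(2)
proof (induct t' rule: dec_induct)
  case (step m) then show ?case using net_mono_step[of n f F "E m" "L m" "E (Suc m)"] assms(1) by (auto simp: is_exec_def)
qed auto

theorem lemma2p9:
  fixes n f :: nat and F :: "nat set" and x :: "nat \<Rightarrow> 'v"
    and E :: "nat \<Rightarrow> 'v gst" and L :: "nat \<Rightarrow> 'v label"
    and i t v :: nat and val :: 'v
  assumes "3 * f < n" and "F \<subseteq> {1..n}" and "card F \<le> f"
    and "is_exec n f F x E L"
    and "i \<in> {1..n} - F"
    and "L t = LAct i (AKey3 val)"
    and "view (ls (E t) i) = v"
  shows "\<exists>S. S \<subseteq> {1..n} - F \<and> card S = f + 1 \<and>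
    (\<forall>j \<in> S. \<forall>v' > v. \<forall>t' d k3 v3 k2 v2 pk2.
        (j, d, MSuggest k3 v3 k2 v2 pk2 v') \<in> net (E t') \<longrightarrow> supports (k2, v2, pk2) (int v, val))"
proof -
  have FS: "F \<subseteq> {1..n}" by fact
  have ex: "is_exec n f F x E L" by fact
  have st: "gstep n f F (E t) (LAct i (AKey3 val)) (E (Suc t))"
    using assms(4,6) unfolding is_exec_def by metis
  obtain s' out where la: "lact n f i (ls (E t) i) (AKey3 val) s' out"
    using st by (cases rule: gstep.cases) auto
  define A where "A = {j. (j, MKey2 val v) \<in> set (rcv (ls (E t) i))}"
  have cA: "n - f \<le> card A" using la unfolding A_def
    by (cases rule: lact.cases) (use assms(7) in auto)
  have finA: "finite A"
  proof (rule finite_subset)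
    show "A \<subseteq> fst ` set (rcv (ls (E t) i))" unfolding A_def by force
  qed simp
  have finF: "finite F" using FS finite_subset by blast
  have "card A - card F \<le> card (A - F)" using diff_card_le_card_Diff[OF finF] .
  then have "f + 1 \<le> card (A - F)" using cA assms(1,3) by linarith
  then obtain S where S: "S \<subseteq> A - F" "card S = f + 1"
    by (meson obtain_subset_with_card_n)
  have IE: "\<And>tt. Inv n F (E tt)" using exec_Inv[OF ex FS] .
  have Ii: "inv_loc (E t) i" using IE[of t] assms(5) by (auto simp: Inv_def)
  have netA: "\<And>j. j \<in> A \<Longrightarrow> (j, i, MKey2 val v) \<in> net (E t)"
    unfolding A_def using invD7[OF Ii] by blast
  have SA: "S \<subseteq> {1..n} - F"
  proof
    fix j assume "j \<in> S"
    then have "j \<in> A" "j \<notin> F" using S by auto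
    then show "j \<in> {1..n} - F" using netA[of j] IE[of t] unfolding Inv_def by blast
  qed
  show ?thesis
  proof (intro exI conjI ballI allI impI)
    show "S \<subseteq> {1..n} - F" by (rule SA)
    show "card S = f + 1" by (rule S(2))
  next
    fix j v' t' d k3 v3 k2 v2 pk2
    assume j: "j \<in> S" and vv: "v < v'" and m: "(j, d, MSuggest k3 v3 k2 v2 pk2 v') \<in> net (E t')"
    define T where "T = max t t'"
    have m1: "(j, d, MSuggest k3 v3 k2 v2 pk2 v') \<in> net (E T)"
      using m exec_net_mono[OF ex, of t' T] unfolding T_def by auto
    have "j \<in> A" using j S by auto
    then have m2: "(j, i, MKey2 val v) \<in> net (E T)"
      using netA exec_net_mono[OF ex, of t T] unfolding T_def by auto
    have "inv_loc (E T) j" using IE[of T] SA j by (auto simp: Inv_def)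
    then show "supports (k2, v2, pk2) (int v, val)" using m1 m2 vv by (rule invD6)
  qed
qed

end
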